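(* The $3$-uniform hypergraphs $O_R$ and $O_B$ are both opaque; i.e., the spectral ranking of $O_R$ differs from that of $\partial^*O_R$, and the spectral ranking of $O_B$ differs from that of $\partial^*O_B$. (Here $\partial^*O_R=\partial^*O_B$; in this multigraph the principal eigenvector takes equal values at $t$ and $b$, while the principal eigenvector $y$ of $O_R$ satisfies $y_t>y_b$.)
   Context: $O_R$ is the $3$-uniform hypergraph on vertex set $\{t,b,p,q,r,s,u\}$ with edges $\{t,p,q\},\{t,r,s\},\{b,q,r\},\{b,p,s\},\{u,p,q\}$; $O_B$ is the $3$-uniform hypergraph on the same vertex set with edges $\{t,p,r\},\{t,p,s\},\{b,p,q\},\{b,r,s\},\{u,p,q\}$. For a connected $k$-uniform hypergraph $H=([n],E)$, writing $x^e=\prod_{v\in e}x_v$, its principal eigenvector is the unique strictly positive $y$ with $\|y\|_k=1$ and $\rho\, y_i^{k-1}=\sum_{e\ni i}y^{e\setminus\{i\}}$ for all $i$, where $\rho=\max_{\|z\|_k^k=1}k\sum_{e\in E}z^e$. The clique-shadow $\partial^*H$ is the multigraph on the same vertices in which $\{u,v\}$ has multiplicity $\mu(uv)=|\{e\in E:u,v\in e\}|$; its principal eigenvector is the positive Perron eigenvector of its adjacency matrix (entries $\mu(uv)$), normalized to unit $2$-norm. The spectral ranking of a (hyper)graph is the ordering of its vertices by decreasing value of the principal eigenvector, tied vertices sharing a rank. A hypergraph is opaque if its spectral ranking differs from that of its clique-shadow. *)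

theory Defs
  imports Main Complex_Main
begin

datatype vtx = T | B | P | Q | R | S | U

lemma UNIV_vtx: "(UNIV :: vtx set) = {T, B, P, Q, R, S, U}"
  by (auto intro: vtx.exhaust)

instance vtx :: finite
  by standard (simp add: UNIV_vtx)

definition O_R :: "vtx set set" where
  "O_R = {{T,P,Q}, {T,R,S}, {B,Q,R}, {B,P,S}, {U,P,Q}}"

definition O_B :: "vtx set set" where
  "O_B = {{T,P,R}, {T,P,S}, {B,P,Q}, {B,R,S}, {U,P,Q}}"

definition hyp_rho :: "nat \<Rightarrow> ('a::finite) set set \<Rightarrow> real" where
  "hyp_rho k E = Sup {real k * (\<Sum>e\<in>E. \<Prod>v\<in>e. z v) | z :: 'a \<Rightarrow> real.
                        (\<Sum>i\<in>UNIV. \<bar>z i\<bar> ^ k) = 1}"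

definition hyp_evec :: "nat \<Rightarrow> ('a::finite) set set \<Rightarrow> ('a \<Rightarrow> real)" where
  "hyp_evec k E = (THE y. (\<forall>i. y i > 0) \<and> (\<Sum>i\<in>UNIV. \<bar>y i\<bar> ^ k) = 1 \<and>
      (\<forall>i. hyp_rho k E * y i ^ (k - 1) = (\<Sum>e\<in>{e\<in>E. i \<in> e}. \<Prod>v\<in>e - {i}. y v)))"

definition shadow_adj :: "('a::finite) set set \<Rightarrow> 'a \<Rightarrow> 'a \<Rightarrow> real" where
  "shadow_adj E x y = (if x = y then 0 else real (card {e\<in>E. x \<in> e \<and> y \<in> e}))"

definition is_eigenpair :: "(('a::finite) \<Rightarrow> 'a \<Rightarrow> real) \<Rightarrow> real \<Rightarrow> ('a \<Rightarrow> real) \<Rightarrow> bool" where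
  "is_eigenpair A lam x \<longleftrightarrow> x \<noteq> (\<lambda>_. 0) \<and> (\<forall>i. (\<Sum>j\<in>UNIV. A i j * x j) = lam * x i)"

definition perron_root :: "(('a::finite) \<Rightarrow> 'a \<Rightarrow> real) \<Rightarrow> real" where
  "perron_root A = (GREATEST lam. \<exists>x. is_eigenpair A lam x)"

definition shadow_evec :: "('a::finite) set set \<Rightarrow> ('a \<Rightarrow> real)" where
  "shadow_evec E = (THE x. (\<forall>i. x i > 0) \<and> (\<Sum>i\<in>UNIV. x i ^ 2) = 1 \<and>
      is_eigenpair (shadow_adj E) (perron_root (shadow_adj E)) x)"

text \<open>The spectral ranking (ordering by decreasing value, ties sharing a rank) is determined by,
  and determines, the weak order "i is ranked at least as high as j".\<close>
definition spectral_ranking :: "('a \<Rightarrow> real) \<Rightarrow> ('a \<times> 'a) set" where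
  "spectral_ranking y = {(i, j). y j \<le> y i}"

definition opaque :: "nat \<Rightarrow> ('a::finite) set set \<Rightarrow> bool" where
  "opaque k E \<longleftrightarrow> spectral_ranking (hyp_evec k E) \<noteq> spectral_ranking (shadow_evec E)"

end

theory Submission
  imports Defs "HOL-Analysis.Analysis"
begin


lemma le_by_eps:
  fixes a b c d :: real
  assumes "0 < d" and H: "\<And>t. 0 < t \<Longrightarrow> t \<le> d \<Longrightarrow> a \<le> b + t * c"
  shows "a \<le> b"
proof (rule ccontr)
  assume "\<not> a \<le> b"
  hence ab: "0 < a - b" by simp
  define t where "t = min d ((a - b) / (2 * (\<bar>c\<bar> + 1)))"
  have tpos: "0 < t" using ab assms(1) by (simp add: t_def)
  have td: "t \<le> d" by (simp add: t_def)
  have t2: "t \<le> (a - b) / (2 * (\<bar>c\<bar> + 1))" by (simp add: t_def)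
  have "t * c \<le> t * \<bar>c\<bar>" using tpos by (simp add: mult_left_mono)
  also have "\<dots> \<le> (a - b) / (2 * (\<bar>c\<bar> + 1)) * \<bar>c\<bar>" by (rule mult_right_mono[OF t2]) simp
  also have "\<dots> < a - b"
  proof -
    define D where "D = 2 * (\<bar>c\<bar> + 1)"
    have Dp: "0 < D" by (simp add: D_def add_pos_nonneg)
    have "(a - b) * \<bar>c\<bar> < (a - b) * D" using ab by (simp add: D_def mult_strict_left_mono)
    hence "(a - b) * \<bar>c\<bar> / D < a - b" using Dp by (simp add: pos_divide_less_eq)
    thus ?thesis by (simp add: D_def)
  qed
  finally have "t * c < a - b" .
  with H[OF tpos td] show False by simp
qed

lemma ex_min_fun: "\<exists>i::'a::finite. \<forall>j. f i \<le> (f j :: real)"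
proof -
  have "Min (range f) \<in> range f" by (rule Min_in) auto
  then obtain i where "f i = Min (range f)" by (metis imageE)
  thus ?thesis by (metis Min_le finite UNIV_I finite_imageI image_eqI)
qed

lemma ex_max_fun: "\<exists>i::'a::finite. \<forall>j. f j \<le> (f i :: real)"
proof -
  have "Max (range f) \<in> range f" by (rule Max_in) auto
  then obtain i where "f i = Max (range f)" by (metis imageE)
  thus ?thesis by (metis Max_ge finite UNIV_I finite_imageI image_eqI)
qed

lemma sum_upd:
  fixes h :: "'a::finite \<Rightarrow> real"
  shows "(\<Sum>j\<in>UNIV. (h(i := a)) j) = (\<Sum>j\<in>UNIV. h j) - h i + a"
proof -
  have "(\<Sum>j\<in>UNIV. (h(i := a)) j) = a + (\<Sum>j\<in>UNIV - {i}. (h(i := a)) j)"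
    by (subst sum.remove[of UNIV i]) auto
  also have "(\<Sum>j\<in>UNIV - {i}. (h(i := a)) j) = (\<Sum>j\<in>UNIV - {i}. h j)"
    by (rule sum.cong) auto
  also have "(\<Sum>j\<in>UNIV - {i}. h j) = (\<Sum>j\<in>UNIV. h j) - h i"
    by (subst sum.remove[of UNIV i]) auto
  finally show ?thesis by simp
qed

lemma sum_ge_eq:
  fixes f g :: "'b \<Rightarrow> real"
  assumes "finite A" "\<And>x. x \<in> A \<Longrightarrow> g x \<le> f x" "sum f A = sum g A" "x \<in> A"
  shows "f x = g x"
proof -
  have "sum (\<lambda>x. f x - g x) A = 0" using assms(3) by (simp add: sum_subtractf)
  hence "\<forall>x\<in>A. f x - g x = 0" using assms(1,2) by (subst (asm) sum_nonneg_eq_0_iff) auto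
  thus ?thesis using assms(4) by auto
qed

lemma prod_eq_ge:
  fixes a b a' b' :: real
  assumes "0 < a" "0 < b" "a \<le> a'" "b \<le> b'" "a' * b' = a * b"
  shows "a' = a \<and> b' = b"
proof (rule ccontr)
  assume "\<not> (a' = a \<and> b' = b)"
  hence "a < a' \<or> b < b'" using assms by auto
  thus False
  proof
    assume "a < a'"
    hence "a * b < a' * b" using assms by simp
    also have "\<dots> \<le> a' * b'" using assms by (intro mult_left_mono) auto
    finally show False using assms by simp
  next
    assume "b < b'"
    hence "a * b < a * b'" using assms by simp
    also have "\<dots> \<le> a' * b'" using assms by (intro mult_right_mono) auto
    finally show False using assms by simp
  qed
qed

lemma exists_max_sphere:
  fixes g :: "('a::finite \<Rightarrow> real) \<Rightarrow> real"
  assumes k: "0 < k" and cont: "continuous_on UNIV (\<lambda>x::real^'a. g (\<lambda>i. x $ i))"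
  shows "\<exists>w. (\<Sum>i\<in>UNIV. \<bar>w i\<bar> ^ k) = 1 \<and> (\<forall>z. (\<Sum>i\<in>UNIV. \<bar>z i\<bar> ^ k) = 1 \<longrightarrow> g z \<le> g w)"
proof -
  define K where "K = {x::real^'a. (\<Sum>i\<in>UNIV. \<bar>x $ i\<bar> ^ k) = 1}"
  have cl: "closed K" unfolding K_def
    by (intro closed_Collect_eq continuous_intros)
  have bd: "bounded K"
  proof -
    have "norm x \<le> real CARD('a)" if "x \<in> K" for x
    proof -
      have "\<bar>x $ i\<bar> \<le> 1" for i
      proof -
        have "\<bar>x $ i\<bar> ^ k \<le> (\<Sum>i\<in>UNIV. \<bar>x $ i\<bar> ^ k)"
          by (rule member_le_sum) auto
        hence "\<bar>x $ i\<bar> ^ k \<le> 1" using that by (simp add: K_def)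
        thus ?thesis using k by (simp add: power_le_one_iff)
      qed
      hence "(\<Sum>i\<in>UNIV. \<bar>x $ i\<bar>) \<le> (\<Sum>i\<in>(UNIV::'a set). 1)" by (intro sum_mono) auto
      thus ?thesis using norm_le_l1_cart[of x] by simp
    qed
    thus ?thesis unfolding bounded_iff by blast
  qed
  have cp: "compact K" using cl bd by (simp add: compact_eq_bounded_closed)
  obtain i0 :: 'a where True by simp
  have pw: "\<And>i. \<bar>if i = i0 then 1 else (0::real)\<bar> ^ k = (if i = i0 then 1 else 0)" using k by auto
  have ne: "(\<chi> i. if i = i0 then 1 else 0) \<in> K"
    by (simp only: K_def mem_Collect_eq vec_lambda_beta pw) simp
  hence "K \<noteq> {}" by auto
  then obtain x where x: "x \<in> K" "\<forall>y\<in>K. g (\<lambda>i. y $ i) \<le> g (\<lambda>i. x $ i)"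
    using continuous_attains_sup[OF cp _ continuous_on_subset[OF cont]] by blast
  show ?thesis
  proof (intro exI[of _ "\<lambda>i. x $ i"] conjI allI impI)
    show "(\<Sum>i\<in>UNIV. \<bar>x $ i\<bar> ^ k) = 1" using x(1) by (simp add: K_def)
    fix z :: "'a \<Rightarrow> real" assume "(\<Sum>i\<in>UNIV. \<bar>z i\<bar> ^ k) = 1"
    hence zK: "(\<chi> i. z i) \<in> K" by (simp add: K_def)
    have e: "vec_nth (\<chi> i. z i) = z" by (rule ext) simp
    from x(2)[rule_format, OF zK] show "g z \<le> g (\<lambda>i. x $ i)" by (simp only: e)
  qed
qed



definition fh :: "('a::finite) set set \<Rightarrow> ('a \<Rightarrow> real) \<Rightarrow> real" where
  "fh E z = (\<Sum>e\<in>E. \<Prod>v\<in>e. z v)"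

definition Nh :: "('a::finite) set set \<Rightarrow> ('a \<Rightarrow> real) \<Rightarrow> 'a \<Rightarrow> real" where
  "Nh E y i = (\<Sum>e\<in>{e\<in>E. i \<in> e}. \<Prod>v\<in>e - {i}. y v)"

locale hg3 =
  fixes E :: "('a::finite) set set"
  assumes card3: "\<And>e. e \<in> E \<Longrightarrow> card e = 3"
    and conn: "\<And>Z. Z \<noteq> {} \<Longrightarrow> (\<And>e. e \<in> E \<Longrightarrow> e \<inter> Z \<noteq> {} \<Longrightarrow> e \<subseteq> Z) \<Longrightarrow> Z = UNIV"
begin

lemma finE: "finite E" by simp

lemma edge3:
  assumes "e \<in> E" "i \<in> e"
  obtains j k where "e = {i,j,k}" "i \<noteq> j" "j \<noteq> k" "i \<noteq> k"
proof -
  obtain x y z where e: "e = {x,y,z}" "x \<noteq> y" "y \<noteq> z" "x \<noteq> z"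
    using card3[OF assms(1)] card_3_iff by metis
  show thesis
  proof (cases "i = x")
    case True then show ?thesis using that[of y z] e by auto
  next
    case False
    show ?thesis
    proof (cases "i = y")
      case True then show ?thesis using that[of x z] e by (auto simp: insert_commute)
    next
      case False then have "i = z" using \<open>i \<noteq> x\<close> assms(2) e by auto
      then show ?thesis using that[of x y] e by (auto simp: insert_commute)
    qed
  qed
qed

lemma edge_diff:
  fixes y :: "'a \<Rightarrow> real"
  assumes "e = {i,j,k}" "i \<noteq> j" "j \<noteq> k" "i \<noteq> k"
  shows "(\<Prod>v\<in>e - {i}. y v) = y j * y k"
proof -
  have "e - {i} = {j,k}" using assms by auto
  thus ?thesis using assms by simp
qed

lemma card_diff2: "e \<in> E \<Longrightarrow> i \<in> e \<Longrightarrow> card (e - {i}) = 2"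
  using card3[of e] by (simp add: card_Diff_singleton)

lemma edge_ne: "e \<in> E \<Longrightarrow> e \<noteq> {}"
  using card3[of e] by auto

lemma fh_hom: "fh E (\<lambda>v. c * z v) = c ^ 3 * fh E z"
  unfolding fh_def sum_distrib_left
  by (rule sum.cong[OF refl]) (simp add: prod.distrib card3)

lemma Nh_nonneg: "(\<And>v. 0 \<le> y v) \<Longrightarrow> 0 \<le> Nh E y i"
  unfolding Nh_def by (intro sum_nonneg prod_nonneg) auto

lemma fh_nonneg: "(\<And>v. 0 \<le> y v) \<Longrightarrow> 0 \<le> fh E y"
  unfolding fh_def by (intro sum_nonneg prod_nonneg) auto

lemma prod_lower:
  fixes a :: real
  assumes "e \<in> E" "i \<in> e" "0 \<le> a" "\<And>v. 0 \<le> z v" "\<And>v. a * z v \<le> y v"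
  shows "a ^ 2 * (\<Prod>v\<in>e - {i}. z v) \<le> (\<Prod>v\<in>e - {i}. y v)"
proof -
  have "a ^ 2 * (\<Prod>v\<in>e - {i}. z v) = (\<Prod>v\<in>e - {i}. a * z v)"
    using card_diff2[OF assms(1,2)] by (simp add: prod.distrib)
  also have "\<dots> \<le> (\<Prod>v\<in>e - {i}. y v)"
    by (rule prod_mono) (use assms in auto)
  finally show ?thesis .
qed

lemma prod_upper:
  fixes a :: real
  assumes "e \<in> E" "i \<in> e" "0 \<le> a" "\<And>v. 0 \<le> y v" "\<And>v. y v \<le> a * z v"
  shows "(\<Prod>v\<in>e - {i}. y v) \<le> a ^ 2 * (\<Prod>v\<in>e - {i}. z v)"
proof -
  have "a ^ 2 * (\<Prod>v\<in>e - {i}. z v) = (\<Prod>v\<in>e - {i}. a * z v)"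
    using card_diff2[OF assms(1,2)] by (simp add: prod.distrib)
  moreover have "(\<Prod>v\<in>e - {i}. y v) \<le> (\<Prod>v\<in>e - {i}. a * z v)"
    by (rule prod_mono) (use assms in auto)
  ultimately show ?thesis by simp
qed

lemma Nh_lower:
  assumes "0 \<le> a" "\<And>v. 0 \<le> z v" "\<And>v. a * z v \<le> y v"
  shows "a ^ 2 * Nh E z i \<le> Nh E y i"
  unfolding Nh_def sum_distrib_left
  apply (rule sum_mono) apply (rule prod_lower) using assms by auto

lemma Nh_upper:
  assumes "0 \<le> a" "\<And>v. 0 \<le> y v" "\<And>v. y v \<le> a * z v"
  shows "Nh E y i \<le> a ^ 2 * Nh E z i"
  unfolding Nh_def sum_distrib_left
  apply (rule sum_mono) apply (rule prod_upper) using assms by auto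

lemma hyp_unique:
  assumes ypos: "\<And>i. 0 < y i" and y'pos: "\<And>i. 0 < y' i"
    and ye: "\<And>i. Nh E y i = \<rho> * y i ^ 2" and y'e: "\<And>i. Nh E y' i = \<rho> * y' i ^ 2"
    and yn: "(\<Sum>i\<in>UNIV. y i ^ 3) = 1" and y'n: "(\<Sum>i\<in>UNIV. y' i ^ 3) = 1"
  shows "y' = y"
proof -
  obtain i0 where i0: "\<And>j. y' i0 / y i0 \<le> y' j / y j" using ex_min_fun[of "\<lambda>j. y' j / y j"] by auto
  define c where "c = y' i0 / y i0"
  have cpos: "0 < c" using ypos y'pos by (simp add: c_def)
  have cle: "c * y j \<le> y' j" for j
  proof -
    have "c \<le> y' j / y j" using i0 by (simp add: c_def)
    thus ?thesis using ypos[of j] by (simp add: pos_le_divide_eq)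
  qed
  define M where "M = {j. y' j = c * y j}"
  have i0M: "i0 \<in> M" using ypos[of i0] by (simp add: M_def c_def)
  have closed: "e \<subseteq> M" if eE: "e \<in> E" and eM: "e \<inter> M \<noteq> {}" for e
  proof -
    obtain i where i: "i \<in> e" "i \<in> M" using eM by auto
    obtain j k where e: "e = {i,j,k}" "i \<noteq> j" "j \<noteq> k" "i \<noteq> k" using edge3[OF eE i(1)] by metis
    have yi: "y' i = c * y i" using i(2) by (simp add: M_def)
    have eq: "Nh E y' i = c ^ 2 * Nh E y i" using ye y'e yi by (simp add: power_mult_distrib)
    have fin: "finite {e\<in>E. i\<in>e}" by simp
    have ge: "c ^ 2 * (\<Prod>v\<in>e'-{i}. y v) \<le> (\<Prod>v\<in>e'-{i}. y' v)" if "e' \<in> {e\<in>E. i\<in>e}" for e'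
      using prod_lower[of e' i c y y'] that cpos ypos cle by (auto intro: less_imp_le)
    have sumeq: "(\<Sum>e'\<in>{e\<in>E. i\<in>e}. \<Prod>v\<in>e'-{i}. y' v) = (\<Sum>e'\<in>{e\<in>E. i\<in>e}. c ^ 2 * (\<Prod>v\<in>e'-{i}. y v))"
      using eq by (simp add: Nh_def sum_distrib_left)
    have "(\<Prod>v\<in>e-{i}. y' v) = c ^ 2 * (\<Prod>v\<in>e-{i}. y v)"
      using sum_ge_eq[OF fin ge sumeq] eE i(1) by simp
    hence "y' j * y' k = (c * y j) * (c * y k)"
      using edge_diff[OF e, of y'] edge_diff[OF e, of y] by (simp add: power2_eq_square)
    hence "y' j = c * y j \<and> y' k = c * y k"
      using prod_eq_ge[of "c * y j" "c * y k" "y' j" "y' k"] cpos ypos cle by simp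
    thus ?thesis using e i by (auto simp: M_def)
  qed
  have "M = UNIV" using conn[of M] closed i0M by auto
  hence y'c: "y' j = c * y j" for j by (auto simp: M_def)
  have "1 = (\<Sum>i\<in>UNIV. (c * y i) ^ 3)" using y'n y'c by simp
  also have "\<dots> = c ^ 3" using yn by (simp add: power_mult_distrib sum_distrib_left[symmetric])
  finally have "c ^ 3 = 1 ^ 3" by simp
  hence "c = 1" using cpos by (subst (asm) power_eq_iff_eq_base) auto
  thus ?thesis using y'c by auto
qed

lemma hyp_min_ratio:
  assumes ypos: "\<And>i. 0 < y i" and ye: "\<And>i. Nh E y i = \<rho> * y i ^ 2" and zpos: "\<And>i. 0 < z i"
  shows "\<exists>i. (\<forall>j. y i / z i \<le> y j / z j) \<and> Nh E z i \<le> \<rho> * z i ^ 2"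
proof -
  obtain i where i: "\<And>j. y i / z i \<le> y j / z j" using ex_min_fun[of "\<lambda>j. y j / z j"] by auto
  define c where "c = y i / z i"
  have cpos: "0 < c" using ypos zpos by (simp add: c_def)
  have cle: "c * z j \<le> y j" for j
  proof -
    have "c \<le> y j / z j" using i by (simp add: c_def)
    thus ?thesis using zpos[of j] by (simp add: pos_le_divide_eq)
  qed
  have yi: "y i = c * z i" using zpos[of i] by (simp add: c_def)
  have "c ^ 2 * Nh E z i \<le> Nh E y i" by (rule Nh_lower) (use cpos zpos cle in \<open>auto intro: less_imp_le\<close>)
  also have "\<dots> = c ^ 2 * (\<rho> * z i ^ 2)" using ye yi by (simp add: power_mult_distrib)
  finally have "Nh E z i \<le> \<rho> * z i ^ 2" using cpos by simp
  thus ?thesis using i by blast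
qed

lemma hyp_max_ratio:
  assumes ypos: "\<And>i. 0 < y i" and ye: "\<And>i. Nh E y i = \<rho> * y i ^ 2" and zpos: "\<And>i. 0 < z i"
  shows "\<exists>i. (\<forall>j. y j / z j \<le> y i / z i) \<and> \<rho> * z i ^ 2 \<le> Nh E z i"
proof -
  obtain i where i: "\<And>j. y j / z j \<le> y i / z i" using ex_max_fun[of "\<lambda>j. y j / z j"] by auto
  define c where "c = y i / z i"
  have cpos: "0 < c" using ypos zpos by (simp add: c_def)
  have cle: "y j \<le> c * z j" for j
  proof -
    have "y j / z j \<le> c" using i by (simp add: c_def)
    thus ?thesis using zpos[of j] by (simp add: pos_divide_le_eq mult.commute)
  qed
  have yi: "y i = c * z i" using zpos[of i] by (simp add: c_def)
  have "c ^ 2 * (\<rho> * z i ^ 2) = Nh E y i" using ye yi by (simp add: power_mult_distrib)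
  also have "\<dots> \<le> c ^ 2 * Nh E z i" by (rule Nh_upper) (use cpos ypos cle in \<open>auto intro: less_imp_le\<close>)
  finally have "\<rho> * z i ^ 2 \<le> Nh E z i" using cpos by simp
  thus ?thesis using i by blast
qed

end


context hg3 begin

lemma fh_upd:
  "fh E (w(i := w i + t)) = fh E w + t * Nh E w i"
proof -
  have "(\<Prod>v\<in>e. (w(i := w i + t)) v) = (\<Prod>v\<in>e. w v) + (if i \<in> e then t * (\<Prod>v\<in>e - {i}. w v) else 0)"
    if "e \<in> E" for e
  proof (cases "i \<in> e")
    case True
    have fe: "finite e" by simp
    have "(\<Prod>v\<in>e. (w(i := w i + t)) v) = (w i + t) * (\<Prod>v\<in>e - {i}. (w(i := w i + t)) v)"
      using prod.remove[OF fe True, of "w(i := w i + t)"] by simp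
    also have "(\<Prod>v\<in>e - {i}. (w(i := w i + t)) v) = (\<Prod>v\<in>e - {i}. w v)"
      by (rule prod.cong) auto
    also have "(\<Prod>v\<in>e. w v) = w i * (\<Prod>v\<in>e - {i}. w v)"
      using prod.remove[OF fe True, of w] by simp
    ultimately show ?thesis using True by (simp add: algebra_simps)
  next
    case False
    have "(\<Prod>v\<in>e. (w(i := w i + t)) v) = (\<Prod>v\<in>e. w v)"
      by (rule prod.cong) (use False in auto)
    thus ?thesis using False by simp
  qed
  hence "fh E (w(i := w i + t)) = (\<Sum>e\<in>E. (\<Prod>v\<in>e. w v) + (if i \<in> e then t * (\<Prod>v\<in>e - {i}. w v) else 0))"
    unfolding fh_def by (rule sum.cong[OF refl])
  also have "\<dots> = fh E w + t * Nh E w i"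
    unfolding fh_def Nh_def sum.distrib sum_distrib_left
    by (simp add: sum.inter_filter)
  finally show ?thesis .
qed

lemma hyp_exists:
  "\<exists>w. (\<forall>i. 0 < w i) \<and> (\<Sum>i\<in>UNIV. w i ^ 3) = 1 \<and> hyp_rho 3 E = 3 * fh E w \<and>
       (\<forall>i. Nh E w i = hyp_rho 3 E * w i ^ 2)"
proof -
  have cont: "continuous_on UNIV (\<lambda>x::real^'a. fh E (\<lambda>i. x $ i))"
    unfolding fh_def by (intro continuous_intros)
  obtain w0 where w0: "(\<Sum>i\<in>UNIV. \<bar>w0 i\<bar> ^ 3) = 1"
    and w0max: "\<And>z. (\<Sum>i\<in>UNIV. \<bar>z i\<bar> ^ 3) = 1 \<Longrightarrow> fh E z \<le> fh E w0"
    using exists_max_sphere[of 3 "fh E", OF _ cont] by auto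
  define w where "w = (\<lambda>i. \<bar>w0 i\<bar>)"
  have wnn: "0 \<le> w i" for i by (simp add: w_def)
  have wn: "(\<Sum>i\<in>UNIV. w i ^ 3) = 1" using w0 by (simp add: w_def)
  have wabs: "\<bar>w i\<bar> = w i" for i by (simp add: w_def)
  have "fh E w0 \<le> fh E w"
  proof -
    have "fh E w0 \<le> \<bar>fh E w0\<bar>" by simp
    also have "\<dots> \<le> (\<Sum>e\<in>E. \<bar>\<Prod>v\<in>e. w0 v\<bar>)" unfolding fh_def by (rule sum_abs)
    also have "\<dots> = fh E w" unfolding fh_def w_def by (simp add: abs_prod)
    finally show ?thesis .
  qed
  define m where "m = fh E w"
  have wmax: "fh E z \<le> m" if "(\<Sum>i\<in>UNIV. \<bar>z i\<bar> ^ 3) = 1" for z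
    using w0max[OF that] \<open>fh E w0 \<le> fh E w\<close> by (simp add: m_def)
  have mnn: "0 \<le> m" unfolding m_def by (rule fh_nonneg) (rule wnn)
  have bound: "fh E z \<le> m * (\<Sum>i\<in>UNIV. \<bar>z i\<bar> ^ 3)" for z
  proof (cases "(\<Sum>i\<in>UNIV. \<bar>z i\<bar> ^ 3) = 0")
    case True
    hence "\<forall>i\<in>UNIV. \<bar>z i\<bar> ^ 3 = 0" by (subst (asm) sum_nonneg_eq_0_iff) auto
    hence z0: "z i = 0" for i by simp
    have "fh E z = 0" unfolding fh_def
    proof (rule sum.neutral, rule ballI)
      fix e assume eE: "e \<in> E"
      thus "(\<Prod>v\<in>e. z v) = 0" using z0 card3[OF eE] by simp
    qed
    thus ?thesis using True by simp
  next
    case False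
    define s where "s = (\<Sum>i\<in>UNIV. \<bar>z i\<bar> ^ 3)"
    have spos: "0 < s" using False sum_nonneg[of UNIV "\<lambda>i. \<bar>z i\<bar> ^ 3"] by (simp add: s_def)
    define c where "c = 1 / root 3 s"
    have c3: "c ^ 3 = 1 / s" using spos by (simp add: c_def power_divide real_root_pow_pos2)
    have cpos: "0 < c" using spos by (simp add: c_def)
    have "(\<Sum>i\<in>UNIV. \<bar>c * z i\<bar> ^ 3) = c ^ 3 * s"
      using cpos by (simp add: s_def abs_mult power_mult_distrib sum_distrib_left)
    also have "\<dots> = 1" using c3 spos by simp
    finally have "fh E (\<lambda>v. c * z v) \<le> m" by (rule wmax)
    hence "fh E z / s \<le> m" using c3 by (simp add: fh_hom)
    thus ?thesis using spos by (simp add: s_def pos_divide_le_eq mult.commute)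
  qed
  have rho: "hyp_rho 3 E = 3 * m"
    unfolding hyp_rho_def
  proof (rule cSup_eq_maximum)
    show "3 * m \<in> {real 3 * (\<Sum>e\<in>E. \<Prod>v\<in>e. z v) |z. (\<Sum>i\<in>UNIV. \<bar>z i\<bar> ^ 3) = 1}"
      using wn wabs by (auto simp: m_def fh_def intro!: exI[of _ w])
    fix x assume "x \<in> {real 3 * (\<Sum>e\<in>E. \<Prod>v\<in>e. z v) |z. (\<Sum>i\<in>UNIV. \<bar>z i\<bar> ^ 3) = 1}"
    then obtain z where "x = 3 * fh E z" "(\<Sum>i\<in>UNIV. \<bar>z i\<bar> ^ 3) = 1" by (auto simp: fh_def)
    thus "x \<le> 3 * m" using wmax by simp
  qed
  have norm1: "(\<Sum>j\<in>UNIV. \<bar>(w(i := a)) j\<bar> ^ 3) = 1 - w i ^ 3 + \<bar>a\<bar> ^ 3" for i a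
  proof -
    have "(\<lambda>j. \<bar>(w(i := a)) j\<bar> ^ 3) = (\<lambda>j. \<bar>w j\<bar> ^ 3)(i := \<bar>a\<bar> ^ 3)" by auto
    hence "(\<Sum>j\<in>UNIV. \<bar>(w(i := a)) j\<bar> ^ 3) = (\<Sum>j\<in>UNIV. ((\<lambda>j. \<bar>w j\<bar> ^ 3)(i := \<bar>a\<bar> ^ 3)) j)"
      by (rule arg_cong[of _ _ "\<lambda>f. sum f UNIV"])
    also have "\<dots> = (\<Sum>j\<in>UNIV. \<bar>w j\<bar> ^ 3) - \<bar>w i\<bar> ^ 3 + \<bar>a\<bar> ^ 3" by (rule sum_upd)
    finally show ?thesis using wn wabs by simp
  qed
  have ineq: "m + t * Nh E w i \<le> m * (1 - w i ^ 3 + \<bar>w i + t\<bar> ^ 3)" for i t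
    using bound[of "w(i := w i + t)"] fh_upd[of w i t] norm1[of i "w i + t"] by (simp add: m_def)
  have eig: "Nh E w i = 3 * m * w i ^ 2" for i
  proof -
    define N where "N = Nh E w i"
    have Nnn: "0 \<le> N" unfolding N_def by (rule Nh_nonneg) (rule wnn)
    have up: "N \<le> 3 * m * w i ^ 2"
    proof (rule le_by_eps[of 1 _ _ "m * (3 * w i + 1)"])
      fix t :: real assume t: "0 < t" "t \<le> 1"
      have "m + t * N \<le> m * (1 - w i ^ 3 + (w i + t) ^ 3)"
        using ineq[where i=i and t=t] t wnn[of i] by (simp add: N_def)
      hence "t * N \<le> t * (m * (3 * w i ^ 2 + 3 * w i * t + t ^ 2))"
        by (simp add: algebra_simps power2_eq_square power3_eq_cube)
      hence "N \<le> m * (3 * w i ^ 2 + 3 * w i * t + t ^ 2)" using t by simp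
      also have "\<dots> \<le> 3 * m * w i ^ 2 + t * (m * (3 * w i + 1))"
      proof -
        have "t ^ 2 \<le> t" using t by (simp add: power2_eq_square mult_le_cancel_left1)
        hence "m * t ^ 2 \<le> m * t" using mnn by (simp add: mult_left_mono)
        thus ?thesis by (simp add: algebra_simps)
      qed
      finally show "N \<le> 3 * m * w i ^ 2 + t * (m * (3 * w i + 1))" .
    qed simp
    have lo: "3 * m * w i ^ 2 \<le> N"
    proof (cases "w i = 0")
      case True thus ?thesis using Nnn by simp
    next
      case False
      hence wpos: "0 < w i" using wnn[of i] by simp
      show ?thesis
      proof (rule le_by_eps[of "w i" _ _ "3 * m * w i"])
        fix s :: real assume s: "0 < s" "s \<le> w i"
        have "m + (- s) * N \<le> m * (1 - w i ^ 3 + (w i - s) ^ 3)"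
          using ineq[where i=i and t="- s"] s by (simp add: N_def)
        hence "s * (m * (3 * w i ^ 2 - 3 * w i * s + s ^ 2)) \<le> s * N"
          by (simp add: algebra_simps power2_eq_square power3_eq_cube)
        hence "m * (3 * w i ^ 2 - 3 * w i * s + s ^ 2) \<le> N" using s by simp
        moreover have "3 * m * w i ^ 2 - s * (3 * m * w i) \<le> m * (3 * w i ^ 2 - 3 * w i * s + s ^ 2)"
          using mnn by (simp add: algebra_simps)
        ultimately show "3 * m * w i ^ 2 \<le> N + s * (3 * m * w i)" by simp
      qed (use wpos in simp)
    qed
    show ?thesis using up lo by (simp add: N_def)
  qed
  have zero_edge: "w k = 0" if eE: "e \<in> E" and e: "e = {i,j,k}" "i \<noteq> j" "j \<noteq> k" "i \<noteq> k"
    and wi: "w i = 0" and wj: "w j = 0" for e i j k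
  proof -
    have H2: "w k \<le> 0 + t * (2 * m)" if t: "0 < t" "t \<le> 1" for t
    proof -
      define z where "z = (w(i := t))(j := t)"
      have wz: "w v \<le> z v" for v using wi wj t by (auto simp: z_def)
      have zk: "z k = w k" using e by (simp add: z_def)
      have "fh E z = (\<Prod>v\<in>e. z v) + (\<Sum>e'\<in>E - {e}. \<Prod>v\<in>e'. z v)"
        unfolding fh_def using eE by (simp add: sum.remove)
      also have "(\<Prod>v\<in>e. z v) = t * t * w k" using e zk by (simp add: z_def)
      also have "(\<Sum>e'\<in>E - {e}. \<Prod>v\<in>e'. z v) \<ge> (\<Sum>e'\<in>E - {e}. \<Prod>v\<in>e'. w v)"
        by (intro sum_mono prod_mono) (use wnn wz in auto)
      hence "t * t * w k + (\<Sum>e'\<in>E - {e}. \<Prod>v\<in>e'. z v) \<ge> t * t * w k + (\<Sum>e'\<in>E - {e}. \<Prod>v\<in>e'. w v)"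
        by simp
      moreover have "(\<Sum>e'\<in>E - {e}. \<Prod>v\<in>e'. w v) = m"
      proof -
        have "m = (\<Prod>v\<in>e. w v) + (\<Sum>e'\<in>E - {e}. \<Prod>v\<in>e'. w v)"
          unfolding m_def fh_def using eE by (simp add: sum.remove)
        moreover have "(\<Prod>v\<in>e. w v) = 0" using e wi by simp
        ultimately show ?thesis by simp
      qed
      ultimately have lowz: "t * t * w k + m \<le> fh E z" by simp
      have "(\<Sum>v\<in>UNIV. \<bar>z v\<bar> ^ 3) = 1 + 2 * t ^ 3"
      proof -
        have "(\<lambda>v. \<bar>z v\<bar> ^ 3) = ((\<lambda>v. \<bar>w v\<bar> ^ 3)(i := t ^ 3))(j := t ^ 3)"
          using t by (auto simp: z_def)
        hence "(\<Sum>v\<in>UNIV. \<bar>z v\<bar> ^ 3) = (\<Sum>v\<in>UNIV. (((\<lambda>v. \<bar>w v\<bar> ^ 3)(i := t ^ 3))(j := t ^ 3)) v)"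
          by (rule arg_cong[of _ _ "\<lambda>f. sum f UNIV"])
        also have "\<dots> = (\<Sum>v\<in>UNIV. ((\<lambda>v. \<bar>w v\<bar> ^ 3)(i := t ^ 3)) v) - ((\<lambda>v. \<bar>w v\<bar> ^ 3)(i := t ^ 3)) j + t ^ 3"
          by (rule sum_upd)
        also have "(\<Sum>v\<in>UNIV. ((\<lambda>v. \<bar>w v\<bar> ^ 3)(i := t ^ 3)) v) = (\<Sum>v\<in>UNIV. \<bar>w v\<bar> ^ 3) - \<bar>w i\<bar> ^ 3 + t ^ 3"
          by (rule sum_upd)
        finally show ?thesis using wn wabs wi wj e by simp
      qed
      hence "fh E z \<le> m * (1 + 2 * t ^ 3)" using bound[of z] by simp
      with lowz have "t * t * w k \<le> t * t * (t * (2 * m))" by (simp add: algebra_simps power3_eq_cube)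
      hence "w k \<le> t * (2 * m)" using t by simp
      thus ?thesis by simp
    qed
    have "w k \<le> 0" apply (rule le_by_eps[of 1 "w k" 0 "2 * m"]) using H2 by auto
    thus ?thesis using wnn[of k] by simp
  qed
  have zero_closed: "e \<subseteq> {v. w v = 0}" if eE: "e \<in> E" and ez: "e \<inter> {v. w v = 0} \<noteq> {}" for e
  proof -
    obtain i where i: "i \<in> e" "w i = 0" using ez by auto
    obtain j k where e: "e = {i,j,k}" "i \<noteq> j" "j \<noteq> k" "i \<noteq> k" using edge3[OF eE i(1)] by metis
    have "Nh E w i = 0" using eig[of i] i by simp
    hence "\<forall>e'\<in>{e\<in>E. i\<in>e}. (\<Prod>v\<in>e' - {i}. w v) = 0"
      unfolding Nh_def by (subst (asm) sum_nonneg_eq_0_iff) (auto intro: prod_nonneg wnn)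
    hence "(\<Prod>v\<in>e - {i}. w v) = 0" using eE i by auto
    hence "w j * w k = 0" using edge_diff[OF e, of w] by simp
    hence "w j = 0 \<or> w k = 0" by simp
    hence "w j = 0 \<and> w k = 0"
    proof
      assume "w j = 0"
      thus ?thesis using zero_edge[OF eE e i(2)] by simp
    next
      assume wk: "w k = 0"
      have e': "e = {i,k,j}" using e by auto
      thus ?thesis using zero_edge[OF eE e' _ _ _ i(2) wk] e wk by auto
    qed
    thus ?thesis using e i by auto
  qed
  have wpos: "0 < w i" for i
  proof (rule ccontr)
    assume "\<not> 0 < w i"
    hence "w i = 0" using wnn[of i] by simp
    hence "{v. w v = 0} \<noteq> {}" by auto
    hence "{v. w v = 0} = UNIV" by (rule conn) (rule zero_closed)
    hence "\<forall>v. w v = 0" by (simp add: set_eq_iff)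
    hence "(\<Sum>i\<in>UNIV. w i ^ 3) = 0" by simp
    thus False using wn by simp
  qed
  show ?thesis
    using wpos wn rho eig by (intro exI[of _ w]) (auto simp: m_def)
qed

lemma hyp_evec_props:
  "(\<forall>i. 0 < hyp_evec 3 E i) \<and> (\<forall>i. Nh E (hyp_evec 3 E) i = hyp_rho 3 E * hyp_evec 3 E i ^ 2)"
proof -
  obtain w where w: "\<forall>i. 0 < w i" "(\<Sum>i\<in>UNIV. w i ^ 3) = 1" "\<forall>i. Nh E w i = hyp_rho 3 E * w i ^ 2"
    using hyp_exists by blast
  have "hyp_evec 3 E = w"
    unfolding hyp_evec_def
  proof (rule the_equality)
    show "(\<forall>i. 0 < w i) \<and> (\<Sum>i\<in>UNIV. \<bar>w i\<bar> ^ 3) = 1 \<and>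
      (\<forall>i. hyp_rho 3 E * w i ^ (3 - 1) = (\<Sum>e\<in>{e \<in> E. i \<in> e}. \<Prod>v\<in>e - {i}. w v))"
      using w by (auto simp: Nh_def abs_of_pos)
    fix y assume y: "(\<forall>i. 0 < y i) \<and> (\<Sum>i\<in>UNIV. \<bar>y i\<bar> ^ 3) = 1 \<and>
      (\<forall>i. hyp_rho 3 E * y i ^ (3 - 1) = (\<Sum>e\<in>{e \<in> E. i \<in> e}. \<Prod>v\<in>e - {i}. y v))"
    have ya: "\<bar>y i\<bar> = y i" for i using y by (simp add: less_imp_le)
    show "y = w"
      by (rule hyp_unique[of w y "hyp_rho 3 E"]) (use w y ya in \<open>auto simp: Nh_def\<close>)
  qed
  thus ?thesis using w by simp
qed

end


definition As :: "('a::finite \<Rightarrow> 'a \<Rightarrow> real) \<Rightarrow> ('a \<Rightarrow> real) \<Rightarrow> 'a \<Rightarrow> real" where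
  "As A x i = (\<Sum>j\<in>UNIV. A i j * x j)"

definition qf :: "('a::finite \<Rightarrow> 'a \<Rightarrow> real) \<Rightarrow> ('a \<Rightarrow> real) \<Rightarrow> real" where
  "qf A x = (\<Sum>i\<in>UNIV. x i * As A x i)"

lemma sum_delta_mult: "(\<Sum>j\<in>(UNIV::'a::finite set). f j * (if j = i then t else 0)) = f i * (t::real)"
proof -
  have "(\<Sum>j\<in>(UNIV::'a set). f j * (if j = i then t else 0)) = (\<Sum>j\<in>UNIV. if j = i then f i * t else 0)"
    by (rule sum.cong) auto
  thus ?thesis by simp
qed

lemma sum_delta_mult': "(\<Sum>j\<in>(UNIV::'a::finite set). (if j = i then t else 0) * f j) = t * (f i :: real)"
  using sum_delta_mult[of f i t] by (simp add: mult.commute)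

lemma As_scale: "As A (\<lambda>j. c * x j) i = c * As A x i"
  unfolding As_def sum_distrib_left by (rule sum.cong) auto

context hg3 begin

lemma A_sym: "shadow_adj E i j = shadow_adj E j i"
  unfolding shadow_adj_def by (auto simp: conj_commute)

lemma A_nn: "0 \<le> shadow_adj E i j"
  unfolding shadow_adj_def by simp

lemma A_diag: "shadow_adj E i i = 0"
  unfolding shadow_adj_def by simp

lemma A_pos:
  assumes "e \<in> E" "i \<in> e" "j \<in> e" "i \<noteq> j"
  shows "0 < shadow_adj E i j"
proof -
  have "e \<in> {e\<in>E. i \<in> e \<and> j \<in> e}" using assms by auto
  hence "{e\<in>E. i \<in> e \<and> j \<in> e} \<noteq> {}" by auto
  hence "0 < card {e\<in>E. i \<in> e \<and> j \<in> e}" by (simp add: card_gt_0_iff)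
  thus ?thesis using assms(4) by (simp add: shadow_adj_def)
qed

lemma As_mono: "(\<And>j. x j \<le> y j) \<Longrightarrow> As (shadow_adj E) x i \<le> As (shadow_adj E) y i"
  unfolding As_def by (intro sum_mono mult_left_mono) (auto simp: A_nn)

lemma shadow_exists:
  "\<exists>w l. (\<forall>i. 0 < w i) \<and> (\<Sum>i\<in>UNIV. w i ^ 2) = 1 \<and> (\<forall>i. As (shadow_adj E) w i = l * w i) \<and>
      (\<forall>x. qf (shadow_adj E) x \<le> l * (\<Sum>i\<in>UNIV. x i ^ 2))"
proof -
  define A where "A = shadow_adj E"
  have cont: "continuous_on UNIV (\<lambda>x::real^'a. qf A (\<lambda>i. x $ i))"
    unfolding qf_def As_def by (intro continuous_intros)
  obtain w0 where w0: "(\<Sum>i\<in>UNIV. \<bar>w0 i\<bar> ^ 2) = 1"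
    and w0max: "\<And>z. (\<Sum>i\<in>UNIV. \<bar>z i\<bar> ^ 2) = 1 \<Longrightarrow> qf A z \<le> qf A w0"
    using exists_max_sphere[of 2 "qf A", OF _ cont] by auto
  define w where "w = (\<lambda>i. \<bar>w0 i\<bar>)"
  have wnn: "0 \<le> w i" for i by (simp add: w_def)
  have wn: "(\<Sum>i\<in>UNIV. w i ^ 2) = 1" using w0 by (simp add: w_def)
  have qf2: "qf A x = (\<Sum>i\<in>UNIV. \<Sum>j\<in>UNIV. x i * (A i j * x j))" for x
    unfolding qf_def As_def by (simp add: sum_distrib_left)
  have "qf A w0 \<le> qf A w"
    unfolding qf2
  proof (intro sum_mono)
    fix i j
    have "w0 i * (A i j * w0 j) \<le> \<bar>w0 i * (A i j * w0 j)\<bar>" by simp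
    also have "\<dots> = w i * (A i j * w j)" using A_nn[of i j] by (simp add: w_def abs_mult A_def)
    finally show "w0 i * (A i j * w0 j) \<le> w i * (A i j * w j)" .
  qed
  define l where "l = qf A w"
  have wmax: "qf A z \<le> l" if "(\<Sum>i\<in>UNIV. z i ^ 2) = 1" for z
    using w0max[of z] that \<open>qf A w0 \<le> qf A w\<close> by (simp add: l_def)
  have lnn: "0 \<le> l" unfolding l_def qf2 using wnn A_nn
    by (intro sum_nonneg mult_nonneg_nonneg) (auto simp: A_def)
  have hom: "qf A (\<lambda>i. c * x i) = c ^ 2 * qf A x" for c x
    unfolding qf_def As_scale sum_distrib_left
    by (rule sum.cong) (auto simp: power2_eq_square)
  have bound: "qf A z \<le> l * (\<Sum>i\<in>UNIV. z i ^ 2)" for z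
  proof (cases "(\<Sum>i\<in>UNIV. z i ^ 2) = 0")
    case True
    hence "\<forall>i\<in>UNIV. z i ^ 2 = 0" by (subst (asm) sum_nonneg_eq_0_iff) auto
    hence "z = (\<lambda>_. 0)" by auto
    hence "qf A z = 0" by (simp add: qf_def)
    thus ?thesis using True by simp
  next
    case False
    define s where "s = (\<Sum>i\<in>UNIV. z i ^ 2)"
    have spos: "0 < s" using False sum_nonneg[of UNIV "\<lambda>i. z i ^ 2"] by (simp add: s_def)
    define c where "c = 1 / sqrt s"
    have c2: "c ^ 2 = 1 / s" using spos by (simp add: c_def power_divide)
    have "(\<Sum>i\<in>UNIV. (c * z i) ^ 2) = c ^ 2 * s"
      by (simp add: s_def power_mult_distrib sum_distrib_left)
    also have "\<dots> = 1" using c2 spos by simp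
    finally have "qf A (\<lambda>i. c * z i) \<le> l" by (rule wmax)
    hence "qf A z / s \<le> l" using c2 by (simp add: hom)
    thus ?thesis using spos by (simp add: s_def pos_divide_le_eq mult.commute)
  qed
  have fo: "qf A (\<lambda>j. w j + (if j = i then t else 0)) = l + 2 * t * As A w i" for i t
  proof -
    define d where "d = (\<lambda>j. if j = i then t else (0::real))"
    have Asd: "As A (\<lambda>j. w j + d j) a = As A w a + A a i * t" for a
      unfolding As_def d_def by (simp add: distrib_left sum.distrib sum_delta_mult)
    have "qf A (\<lambda>j. w j + d j) = (\<Sum>a\<in>UNIV. w a * As A w a + t * (A a i * w a) + d a * As A w a + t * (d a * A a i))"
      unfolding qf_def Asd by (rule sum.cong) (auto simp: algebra_simps)
    also have "\<dots> = l + t * (\<Sum>a\<in>UNIV. A a i * w a) + t * As A w i + t * (t * A i i)"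
      by (simp add: sum.distrib sum_distrib_left[symmetric] d_def sum_delta_mult' l_def qf_def)
    also have "(\<Sum>a\<in>UNIV. A a i * w a) = As A w i"
      unfolding As_def A_def by (rule sum.cong) (auto simp: A_sym)
    finally show ?thesis by (simp add: d_def A_def A_diag)
  qed
  have nrm: "(\<Sum>j\<in>UNIV. (w j + (if j = i then t else 0)) ^ 2) = 1 + 2 * t * w i + t ^ 2" for i t
  proof -
    have "(\<Sum>j\<in>UNIV. (w j + (if j = i then t else 0)) ^ 2) =
      (\<Sum>j\<in>UNIV. w j ^ 2 + 2 * (w j * (if j = i then t else 0)) + (if j = i then t else 0) * (if j = i then t else 0))"
      by (rule sum.cong) (auto simp: power2_eq_square algebra_simps)
    also have "\<dots> = 1 + 2 * t * w i + t ^ 2"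
      using wn by (simp add: sum.distrib sum_distrib_left[symmetric] sum_delta_mult power2_eq_square)
    finally show ?thesis .
  qed
  have ineq: "2 * t * As A w i \<le> l * (2 * t * w i + t ^ 2)" for i t
    using bound[of "\<lambda>j. w j + (if j = i then t else 0)"] fo[of i t] nrm[of i t]
    by (simp add: algebra_simps)
  have eig: "As A w i = l * w i" for i
  proof -
    have up: "As A w i \<le> l * w i"
    proof (rule le_by_eps[of 1 _ _ "l / 2"])
      fix t :: real assume t: "0 < t" "t \<le> 1"
      have "t * (2 * As A w i) \<le> t * (2 * (l * w i + t * (l / 2)))"
        using ineq[of t i] by (simp add: algebra_simps power2_eq_square)
      thus "As A w i \<le> l * w i + t * (l / 2)" using t by simp
    qed simp
    have lo: "l * w i \<le> As A w i"
    proof (rule le_by_eps[of 1 _ _ "l / 2"])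
      fix s :: real assume s: "0 < s" "s \<le> 1"
      have "s * (2 * (l * w i)) \<le> s * (2 * (As A w i + s * (l / 2)))"
        using ineq[of "- s" i] by (simp add: algebra_simps power2_eq_square)
      thus "l * w i \<le> As A w i + s * (l / 2)" using s by simp
    qed simp
    show ?thesis using up lo by simp
  qed
  have zero_closed: "e \<subseteq> {v. w v = 0}" if eE: "e \<in> E" and ez: "e \<inter> {v. w v = 0} \<noteq> {}" for e
  proof
    fix j assume j: "j \<in> e"
    obtain i where i: "i \<in> e" "w i = 0" using ez by auto
    show "j \<in> {v. w v = 0}"
    proof (cases "j = i")
      case True thus ?thesis using i by simp
    next
      case False
      have "As A w i = 0" using eig[of i] i by simp
      hence "\<forall>j\<in>UNIV. A i j * w j = 0" unfolding As_def
        by (subst (asm) sum_nonneg_eq_0_iff) (auto simp: A_def A_nn wnn)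
      moreover have "0 < A i j" using A_pos[OF eE i(1) j] False by (simp add: A_def)
      ultimately have "w j = 0" by (metis less_irrefl mult_eq_0_iff UNIV_I)
      thus ?thesis by simp
    qed
  qed
  have wpos: "0 < w i" for i
  proof (rule ccontr)
    assume "\<not> 0 < w i"
    hence "w i = 0" using wnn[of i] by simp
    hence "{v. w v = 0} \<noteq> {}" by auto
    hence "{v. w v = 0} = UNIV" by (rule conn) (rule zero_closed)
    hence "\<forall>v. w v = 0" by (simp add: set_eq_iff)
    hence "(\<Sum>i\<in>UNIV. w i ^ 2) = 0" by simp
    thus False using wn by simp
  qed
  show ?thesis
    using wpos wn eig bound by (intro exI[of _ w] exI[of _ l]) (auto simp: A_def)
qed

lemma shadow_unique:
  assumes xpos: "\<And>i. 0 < x i" and wpos: "\<And>i. 0 < w i"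
    and xe: "\<And>i. As (shadow_adj E) x i = l * x i" and we: "\<And>i. As (shadow_adj E) w i = l * w i"
    and xn: "(\<Sum>i\<in>UNIV. x i ^ 2) = 1" and wn: "(\<Sum>i\<in>UNIV. w i ^ 2) = 1"
  shows "x = w"
proof -
  define A where "A = shadow_adj E"
  obtain i0 where i0: "\<And>j. x i0 / w i0 \<le> x j / w j" using ex_min_fun[of "\<lambda>j. x j / w j"] by auto
  define c where "c = x i0 / w i0"
  have cpos: "0 < c" using xpos wpos by (simp add: c_def)
  have cle: "c * w j \<le> x j" for j
  proof -
    have "c \<le> x j / w j" using i0 by (simp add: c_def)
    thus ?thesis using wpos[of j] by (simp add: pos_le_divide_eq)
  qed
  define M where "M = {j. x j = c * w j}"
  have i0M: "i0 \<in> M" using wpos[of i0] by (simp add: M_def c_def)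
  have closed: "e \<subseteq> M" if eE: "e \<in> E" and eM: "e \<inter> M \<noteq> {}" for e
  proof
    fix j assume j: "j \<in> e"
    obtain i where i: "i \<in> e" "i \<in> M" using eM by auto
    show "j \<in> M"
    proof (cases "j = i")
      case True thus ?thesis using i by simp
    next
      case False
      have xi: "x i = c * w i" using i(2) by (simp add: M_def)
      have "(\<Sum>j\<in>UNIV. A i j * x j) = (\<Sum>j\<in>UNIV. A i j * (c * w j))"
        using xe[of i] we[of i] xi As_scale[of A c w i] by (simp add: A_def As_def)
      hence "A i j * x j = A i j * (c * w j)"
        by (rule sum_ge_eq[rotated 2]) (auto intro: mult_left_mono cle simp: A_def A_nn)
      moreover have "0 < A i j" using A_pos[OF eE i(1) j] False by (simp add: A_def)
      ultimately show ?thesis by (simp add: M_def)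
    qed
  qed
  have "M = UNIV" using conn[of M] closed i0M by auto
  hence xc: "x j = c * w j" for j by (auto simp: M_def)
  have "1 = (\<Sum>i\<in>UNIV. (c * w i) ^ 2)" using xn xc by simp
  also have "\<dots> = c ^ 2" using wn by (simp add: power_mult_distrib sum_distrib_left[symmetric])
  finally have "c ^ 2 = 1 ^ 2" by simp
  hence "c = 1" using cpos by (subst (asm) power_eq_iff_eq_base) auto
  thus ?thesis using xc by auto
qed

lemma shadow_evec_props:
  "(\<forall>i. 0 < shadow_evec E i) \<and>
   (\<forall>i. As (shadow_adj E) (shadow_evec E) i = perron_root (shadow_adj E) * shadow_evec E i)"
proof -
  obtain w l where w: "\<forall>i. 0 < w i" "(\<Sum>i\<in>UNIV. w i ^ 2) = 1" "\<forall>i. As (shadow_adj E) w i = l * w i"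
    and bd: "\<forall>x. qf (shadow_adj E) x \<le> l * (\<Sum>i\<in>UNIV. x i ^ 2)"
    using shadow_exists by blast
  have eigw: "is_eigenpair (shadow_adj E) l w"
    unfolding is_eigenpair_def
  proof
    show "w \<noteq> (\<lambda>_. 0)" using w(1) by (metis less_irrefl)
    show "\<forall>i. (\<Sum>j\<in>UNIV. shadow_adj E i j * w j) = l * w i" using w(3) by (simp add: As_def)
  qed
  have pr: "perron_root (shadow_adj E) = l"
    unfolding perron_root_def
  proof (rule Greatest_equality)
    show "\<exists>x. is_eigenpair (shadow_adj E) l x" using eigw by blast
    fix lam assume "\<exists>x. is_eigenpair (shadow_adj E) lam x"
    then obtain x where x: "x \<noteq> (\<lambda>_. 0)" "\<forall>i. (\<Sum>j\<in>UNIV. shadow_adj E i j * x j) = lam * x i"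
      unfolding is_eigenpair_def by blast
    obtain i where "x i \<noteq> 0" using x(1) by auto
    hence "0 < x i ^ 2" by simp
    moreover have "x i ^ 2 \<le> (\<Sum>i\<in>UNIV. x i ^ 2)" by (rule member_le_sum) auto
    ultimately have spos: "0 < (\<Sum>i\<in>UNIV. x i ^ 2)" by linarith
    have "qf (shadow_adj E) x = lam * (\<Sum>i\<in>UNIV. x i ^ 2)"
      unfolding qf_def As_def using x(2) by (simp add: sum_distrib_left power2_eq_square algebra_simps)
    hence "lam * (\<Sum>i\<in>UNIV. x i ^ 2) \<le> l * (\<Sum>i\<in>UNIV. x i ^ 2)" using bd by metis
    thus "lam \<le> l" using spos by simp
  qed
  have "shadow_evec E = w"
    unfolding shadow_evec_def
  proof (rule the_equality)
    show "(\<forall>i. 0 < w i) \<and> (\<Sum>i\<in>UNIV. w i ^ 2) = 1 \<and> is_eigenpair (shadow_adj E) (perron_root (shadow_adj E)) w"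
      using w eigw pr by simp
    fix x assume x: "(\<forall>i. 0 < x i) \<and> (\<Sum>i\<in>UNIV. x i ^ 2) = 1 \<and> is_eigenpair (shadow_adj E) (perron_root (shadow_adj E)) x"
    show "x = w"
      by (rule shadow_unique[of x w l]) (use x w pr in \<open>auto simp: is_eigenpair_def As_def\<close>)
  qed
  thus ?thesis using w pr by simp
qed

lemma sh_min_ratio:
  assumes xpos: "\<And>i. 0 < x i" and xe: "\<And>i. As (shadow_adj E) x i = l * x i" and zpos: "\<And>i. 0 < z i"
  shows "\<exists>i. (\<forall>j. x i / z i \<le> x j / z j) \<and> As (shadow_adj E) z i \<le> l * z i"
proof -
  obtain i where i: "\<And>j. x i / z i \<le> x j / z j" using ex_min_fun[of "\<lambda>j. x j / z j"] by auto
  define c where "c = x i / z i"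
  have cpos: "0 < c" using xpos zpos by (simp add: c_def)
  have cle: "c * z j \<le> x j" for j
  proof -
    have "c \<le> x j / z j" using i by (simp add: c_def)
    thus ?thesis using zpos[of j] by (simp add: pos_le_divide_eq)
  qed
  have xi: "x i = c * z i" using zpos[of i] by (simp add: c_def)
  have "c * As (shadow_adj E) z i = As (shadow_adj E) (\<lambda>j. c * z j) i" by (simp add: As_scale)
  also have "\<dots> \<le> As (shadow_adj E) x i" by (rule As_mono) (rule cle)
  also have "\<dots> = c * (l * z i)" using xe xi by simp
  finally have "As (shadow_adj E) z i \<le> l * z i" using cpos by simp
  thus ?thesis using i by blast
qed

lemma sh_max_ratio:
  assumes xpos: "\<And>i. 0 < x i" and xe: "\<And>i. As (shadow_adj E) x i = l * x i" and zpos: "\<And>i. 0 < z i"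
  shows "\<exists>i. (\<forall>j. x j / z j \<le> x i / z i) \<and> l * z i \<le> As (shadow_adj E) z i"
proof -
  obtain i where i: "\<And>j. x j / z j \<le> x i / z i" using ex_max_fun[of "\<lambda>j. x j / z j"] by auto
  define c where "c = x i / z i"
  have cpos: "0 < c" using xpos zpos by (simp add: c_def)
  have cle: "x j \<le> c * z j" for j
  proof -
    have "x j / z j \<le> c" using i by (simp add: c_def)
    thus ?thesis using zpos[of j] by (simp add: pos_divide_le_eq mult.commute)
  qed
  have xi: "x i = c * z i" using zpos[of i] by (simp add: c_def)
  have "c * (l * z i) = As (shadow_adj E) x i" using xe xi by simp
  also have "\<dots> \<le> As (shadow_adj E) (\<lambda>j. c * z j) i" by (rule As_mono) (rule cle)
  also have "\<dots> = c * As (shadow_adj E) z i" by (simp add: As_scale)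
  finally have "l * z i \<le> As (shadow_adj E) z i" using cpos by simp
  thus ?thesis using i by blast
qed

lemma hyp_compare:
  assumes wpos: "\<And>i. 0 < w i" and wb: "\<And>i. Nh E w i < r * w i ^ 2"
    and zpos: "\<And>i. 0 < z i" and zb: "\<And>i. i \<noteq> a \<Longrightarrow> r * z i ^ 2 \<le> Nh E z i"
    and zab: "z a < z b"
  shows "hyp_evec 3 E a < hyp_evec 3 E b"
proof -
  define y where "y = hyp_evec 3 E"
  define \<rho> where "\<rho> = hyp_rho 3 E"
  have ypos: "\<And>i. 0 < y i" and ye: "\<And>i. Nh E y i = \<rho> * y i ^ 2"
    using hyp_evec_props by (auto simp: y_def \<rho>_def)
  obtain i where "\<rho> * w i ^ 2 \<le> Nh E w i" using hyp_max_ratio[of y \<rho> w, OF ypos ye wpos] by blast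
  hence "\<rho> * w i ^ 2 < r * w i ^ 2" using wb[of i] by simp
  hence rr: "\<rho> < r" using wpos[of i] by simp
  obtain i where i: "\<forall>j. y i / z i \<le> y j / z j" "Nh E z i \<le> \<rho> * z i ^ 2"
    using hyp_min_ratio[of y \<rho> z, OF ypos ye zpos] by blast
  have "i = a"
  proof (rule ccontr)
    assume "i \<noteq> a"
    hence "r * z i ^ 2 \<le> \<rho> * z i ^ 2" using zb[of i] i(2) by simp
    moreover have "\<rho> * z i ^ 2 < r * z i ^ 2" using rr zpos[of i] by simp
    ultimately show False by simp
  qed
  hence "y a / z a \<le> y b / z b" using i by simp
  hence "y a * z b \<le> y b * z a" using zpos[of a] zpos[of b] by (simp add: divide_le_eq_1 field_simps)
  moreover have "y a * z a < y a * z b" using ypos[of a] zab by simp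
  ultimately have "y a * z a < y b * z a" by simp
  thus ?thesis using zpos[of a] by (simp add: y_def)
qed

lemma sh_compare:
  assumes wpos: "\<And>i. 0 < w i" and wb: "\<And>i. As (shadow_adj E) w i < r * w i"
    and zpos: "\<And>i. 0 < z i" and zb: "\<And>i. i \<noteq> a \<Longrightarrow> r * z i \<le> As (shadow_adj E) z i"
    and zab: "z a < z b"
  shows "shadow_evec E a < shadow_evec E b"
proof -
  define y where "y = shadow_evec E"
  define \<rho> where "\<rho> = perron_root (shadow_adj E)"
  have ypos: "\<And>i. 0 < y i" and ye: "\<And>i. As (shadow_adj E) y i = \<rho> * y i"
    using shadow_evec_props by (auto simp: y_def \<rho>_def)
  obtain i where "\<rho> * w i \<le> As (shadow_adj E) w i" using sh_max_ratio[of y \<rho> w, OF ypos ye wpos] by blast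
  hence "\<rho> * w i < r * w i" using wb[of i] by simp
  hence rr: "\<rho> < r" using wpos[of i] by simp
  obtain i where i: "\<forall>j. y i / z i \<le> y j / z j" "As (shadow_adj E) z i \<le> \<rho> * z i"
    using sh_min_ratio[of y \<rho> z, OF ypos ye zpos] by blast
  have "i = a"
  proof (rule ccontr)
    assume "i \<noteq> a"
    hence "r * z i \<le> \<rho> * z i" using zb[of i] i(2) by simp
    moreover have "\<rho> * z i < r * z i" using rr zpos[of i] by simp
    ultimately show False by simp
  qed
  hence "y a / z a \<le> y b / z b" using i by simp
  hence "y a * z b \<le> y b * z a" using zpos[of a] zpos[of b] by (simp add: field_simps)
  moreover have "y a * z a < y a * z b" using ypos[of a] zab by simp
  ultimately have "y a * z a < y b * z a" by simp
  thus ?thesis using zpos[of a] by (simp add: y_def)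
qed

end


definition memv :: "vtx set \<Rightarrow> bool list" where
  "memv e = [T\<in>e, B\<in>e, P\<in>e, Q\<in>e, R\<in>e, S\<in>e, U\<in>e]"

lemma dist_memv: "distinct (map memv L) \<Longrightarrow> distinct L"
  by (simp add: distinct_map)

lemma O_R_list: "O_R = set [{T,P,Q}, {T,R,S}, {B,Q,R}, {B,P,S}, {U,P,Q}]"
  by (simp add: O_R_def)
lemma O_R_dist: "distinct [{T,P,Q}, {T,R,S}, {B,Q,R}, {B,P,S}, {U,P,Q}]"
  by (rule dist_memv) (simp add: memv_def)
lemma O_B_list: "O_B = set [{T,P,R}, {T,P,S}, {B,P,Q}, {B,R,S}, {U,P,Q}]"
  by (simp add: O_B_def)
lemma O_B_dist: "distinct [{T,P,R}, {T,P,S}, {B,P,Q}, {B,R,S}, {U,P,Q}]"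
  by (rule dist_memv) (simp add: memv_def)

lemma Nh_list: "distinct L \<Longrightarrow> Nh (set L) y i = sum_list (map (\<lambda>e. if i \<in> e then \<Prod>v\<in>e - {i}. y v else 0) L)"
  unfolding Nh_def by (simp add: sum.inter_filter sum.distinct_set_conv_list)

lemma Nh_O_R: "Nh O_R y T = y P * y Q + y R * y S" "Nh O_R y B = y Q * y R + y P * y S"
   "Nh O_R y P = y T * y Q + y B * y S + y U * y Q" "Nh O_R y Q = y T * y P + y B * y R + y U * y P"
   "Nh O_R y R = y T * y S + y B * y Q" "Nh O_R y S = y T * y R + y B * y P" "Nh O_R y U = y P * y Q"
  unfolding O_R_list Nh_list[OF O_R_dist] by (simp_all add: insert_Diff_if ac_simps)

lemma Nh_O_B: "Nh O_B y T = y P * y R + y P * y S" "Nh O_B y B = y P * y Q + y R * y S"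
   "Nh O_B y P = y T * y R + y T * y S + y B * y Q + y U * y Q" "Nh O_B y Q = y B * y P + y U * y P"
   "Nh O_B y R = y T * y P + y B * y S" "Nh O_B y S = y T * y P + y B * y R" "Nh O_B y U = y P * y Q"
  unfolding O_B_list Nh_list[OF O_B_dist] by (simp_all add: insert_Diff_if ac_simps)

lemma As_shadow:
  fixes E :: "('a::finite) set set"
  shows "As (shadow_adj E) x i = (\<Sum>e\<in>E. if i \<in> e then (\<Sum>j\<in>e - {i}. x j) else 0)"
proof -
  have "As (shadow_adj E) x i = (\<Sum>j\<in>UNIV. \<Sum>e\<in>E. if i \<in> e \<and> j \<in> e - {i} then x j else 0)"
    unfolding As_def
  proof (rule sum.cong[OF refl])
    fix j
    show "shadow_adj E i j * x j = (\<Sum>e\<in>E. if i \<in> e \<and> j \<in> e - {i} then x j else 0)"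
    proof (cases "i = j")
      case True thus ?thesis by (simp add: shadow_adj_def)
    next
      case False
      have "real (card {e\<in>E. i\<in>e \<and> j\<in>e}) = (\<Sum>e\<in>{e\<in>E. i\<in>e \<and> j\<in>e}. 1)"
        by (rule real_of_card)
      also have "\<dots> = (\<Sum>e\<in>E. if i\<in>e \<and> j\<in>e then 1 else 0)"
        by (rule sum.inter_filter) simp
      finally have "real (card {e\<in>E. i\<in>e \<and> j\<in>e}) = (\<Sum>e\<in>E. if i\<in>e \<and> j\<in>e then 1 else 0)" .
      hence "shadow_adj E i j * x j = (\<Sum>e\<in>E. (if i\<in>e \<and> j\<in>e then 1 else 0) * x j)"
        using False by (simp add: shadow_adj_def sum_distrib_right)
      also have "\<dots> = (\<Sum>e\<in>E. if i \<in> e \<and> j \<in> e - {i} then x j else 0)"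
        using False by (intro sum.cong) auto
      finally show ?thesis .
    qed
  qed
  also have "\<dots> = (\<Sum>e\<in>E. \<Sum>j\<in>UNIV. if i \<in> e \<and> j \<in> e - {i} then x j else 0)" by (rule sum.swap)
  also have "\<dots> = (\<Sum>e\<in>E. if i \<in> e then (\<Sum>j\<in>e - {i}. x j) else 0)"
  proof (rule sum.cong[OF refl])
    fix e
    show "(\<Sum>j\<in>UNIV. if i \<in> e \<and> j \<in> e - {i} then x j else 0) = (if i \<in> e then (\<Sum>j\<in>e - {i}. x j) else 0)"
    proof (cases "i \<in> e")
      case True
      have "(\<Sum>j\<in>UNIV. if i \<in> e \<and> j \<in> e - {i} then x j else 0) = (\<Sum>j\<in>UNIV. if j \<in> e - {i} then x j else 0)"
        using True by (intro sum.cong) auto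
      also have "\<dots> = (\<Sum>j\<in>UNIV \<inter> (e - {i}). x j)" by (rule sum.inter_restrict[symmetric]) simp
      finally show ?thesis using True by simp
    qed simp
  qed
  finally show ?thesis .
qed

lemma As_list: "distinct L \<Longrightarrow> As (shadow_adj (set L)) x i = sum_list (map (\<lambda>e. if i \<in> e then (\<Sum>j\<in>e - {i}. x j) else 0) L)"
  by (simp add: As_shadow sum.distinct_set_conv_list)

lemma As_O_R: "As (shadow_adj O_R) x T = x P + x Q + x R + x S"
  "As (shadow_adj O_R) x B = x P + x Q + x R + x S"
  unfolding O_R_list As_list[OF O_R_dist] by (simp_all add: insert_Diff_if ac_simps)

lemma As_O_B: "As (shadow_adj O_B) x T = 2 * x P + x R + x S"
  "As (shadow_adj O_B) x B = x P + x Q + x R + x S"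
  "As (shadow_adj O_B) x P = 2 * x T + x B + 2 * x Q + x R + x S + x U"
  "As (shadow_adj O_B) x Q = x B + 2 * x P + x U"
  "As (shadow_adj O_B) x R = x T + x B + x P + x S"
  "As (shadow_adj O_B) x S = x T + x B + x P + x R"
  "As (shadow_adj O_B) x U = x P + x Q"
  unfolding O_B_list As_list[OF O_B_dist] by (simp_all add: insert_Diff_if algebra_simps)

lemma hg3_O_R: "hg3 O_R"
proof
  fix e assume "e \<in> O_R" thus "card e = 3" by (auto simp: O_R_def)
next
  fix Z :: "vtx set" assume ne: "Z \<noteq> {}" and h: "\<And>e. e \<in> O_R \<Longrightarrow> e \<inter> Z \<noteq> {} \<Longrightarrow> e \<subseteq> Z"
  have e1: "T \<in> Z \<or> P \<in> Z \<or> Q \<in> Z \<Longrightarrow> T \<in> Z \<and> P \<in> Z \<and> Q \<in> Z" using h[of "{T,P,Q}"] by (auto simp: O_R_def)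
  have e2: "T \<in> Z \<or> R \<in> Z \<or> S \<in> Z \<Longrightarrow> T \<in> Z \<and> R \<in> Z \<and> S \<in> Z" using h[of "{T,R,S}"] by (auto simp: O_R_def)
  have e3: "B \<in> Z \<or> Q \<in> Z \<or> R \<in> Z \<Longrightarrow> B \<in> Z \<and> Q \<in> Z \<and> R \<in> Z" using h[of "{B,Q,R}"] by (auto simp: O_R_def)
  have e4: "B \<in> Z \<or> P \<in> Z \<or> S \<in> Z \<Longrightarrow> B \<in> Z \<and> P \<in> Z \<and> S \<in> Z" using h[of "{B,P,S}"] by (auto simp: O_R_def)
  have e5: "U \<in> Z \<or> P \<in> Z \<or> Q \<in> Z \<Longrightarrow> U \<in> Z \<and> P \<in> Z \<and> Q \<in> Z" using h[of "{U,P,Q}"] by (auto simp: O_R_def)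
  obtain a where a: "a \<in> Z" using ne by auto
  have "a = T \<or> a = B \<or> a = P \<or> a = Q \<or> a = R \<or> a = S \<or> a = U" by (cases a) simp_all
  hence "T \<in> Z \<or> B \<in> Z \<or> P \<in> Z \<or> Q \<in> Z \<or> R \<in> Z \<or> S \<in> Z \<or> U \<in> Z" using a by blast
  hence all: "T \<in> Z \<and> B \<in> Z \<and> P \<in> Z \<and> Q \<in> Z \<and> R \<in> Z \<and> S \<in> Z \<and> U \<in> Z" using e1 e2 e3 e4 e5 by blast
  have "x \<in> Z" for x using all by (cases x) simp_all
  thus "Z = UNIV" by (rule UNIV_eq_I[symmetric])
qed
lemma hg3_O_B: "hg3 O_B"
proof
  fix e assume "e \<in> O_B" thus "card e = 3" by (auto simp: O_B_def)
next
  fix Z :: "vtx set" assume ne: "Z \<noteq> {}" and h: "\<And>e. e \<in> O_B \<Longrightarrow> e \<inter> Z \<noteq> {} \<Longrightarrow> e \<subseteq> Z"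
  have e1: "T \<in> Z \<or> P \<in> Z \<or> R \<in> Z \<Longrightarrow> T \<in> Z \<and> P \<in> Z \<and> R \<in> Z" using h[of "{T,P,R}"] by (auto simp: O_B_def)
  have e2: "T \<in> Z \<or> P \<in> Z \<or> S \<in> Z \<Longrightarrow> T \<in> Z \<and> P \<in> Z \<and> S \<in> Z" using h[of "{T,P,S}"] by (auto simp: O_B_def)
  have e3: "B \<in> Z \<or> P \<in> Z \<or> Q \<in> Z \<Longrightarrow> B \<in> Z \<and> P \<in> Z \<and> Q \<in> Z" using h[of "{B,P,Q}"] by (auto simp: O_B_def)
  have e4: "B \<in> Z \<or> R \<in> Z \<or> S \<in> Z \<Longrightarrow> B \<in> Z \<and> R \<in> Z \<and> S \<in> Z" using h[of "{B,R,S}"] by (auto simp: O_B_def)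
  have e5: "U \<in> Z \<or> P \<in> Z \<or> Q \<in> Z \<Longrightarrow> U \<in> Z \<and> P \<in> Z \<and> Q \<in> Z" using h[of "{U,P,Q}"] by (auto simp: O_B_def)
  obtain a where a: "a \<in> Z" using ne by auto
  have "a = T \<or> a = B \<or> a = P \<or> a = Q \<or> a = R \<or> a = S \<or> a = U" by (cases a) simp_all
  hence "T \<in> Z \<or> B \<in> Z \<or> P \<in> Z \<or> Q \<in> Z \<or> R \<in> Z \<or> S \<in> Z \<or> U \<in> Z" using a by blast
  hence all: "T \<in> Z \<and> B \<in> Z \<and> P \<in> Z \<and> Q \<in> Z \<and> R \<in> Z \<and> S \<in> Z \<and> U \<in> Z" using e1 e2 e3 e4 e5 by blast
  have "x \<in> Z" for x using all by (cases x) simp_all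
  thus "Z = UNIV" by (rule UNIV_eq_I[symmetric])
qed



definition w1 :: "vtx \<Rightarrow> real" where
  "w1 v = (case v of T \<Rightarrow> 515968 | B \<Rightarrow> 512058 | P \<Rightarrow> 593835 | Q \<Rightarrow> 593835 | R \<Rightarrow> 498560 | S \<Rightarrow> 498560 | U \<Rightarrow> 395165)"
definition z1 :: "vtx \<Rightarrow> real" where
  "z1 v = (case v of T \<Rightarrow> 515949 | B \<Rightarrow> 512058 | P \<Rightarrow> 593815 | Q \<Rightarrow> 593815 | R \<Rightarrow> 498546 | S \<Rightarrow> 498546 | U \<Rightarrow> 395150)"
definition w2 :: "vtx \<Rightarrow> real" where
  "w2 v = (case v of T \<Rightarrow> 536382 | B \<Rightarrow> 502502 | P \<Rightarrow> 651530 | Q \<Rightarrow> 496306 | R \<Rightarrow> 511626 | S \<Rightarrow> 511626 | U \<Rightarrow> 373557)"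
definition z2 :: "vtx \<Rightarrow> real" where
  "z2 v = (case v of T \<Rightarrow> 536354 | B \<Rightarrow> 502482 | P \<Rightarrow> 651504 | Q \<Rightarrow> 496306 | R \<Rightarrow> 511600 | S \<Rightarrow> 511600 | U \<Rightarrow> 373548)"
definition w3 :: "vtx \<Rightarrow> real" where
  "w3 v = (case v of T \<Rightarrow> 387686 | B \<Rightarrow> 341752 | P \<Rightarrow> 572367 | Q \<Rightarrow> 354379 | R \<Rightarrow> 347549 | S \<Rightarrow> 347549 | U \<Rightarrow> 195282)"
definition z3 :: "vtx \<Rightarrow> real" where
  "z3 v = (case v of T \<Rightarrow> 387662 | B \<Rightarrow> 341731 | P \<Rightarrow> 572327 | Q \<Rightarrow> 354352 | R \<Rightarrow> 347549 | S \<Rightarrow> 347528 | U \<Rightarrow> 195266)"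

lemma hyp_O_R: "hyp_evec 3 O_R B < hyp_evec 3 O_R T"
proof (rule hg3.hyp_compare[OF hg3_O_R, of w1 "56457/25000" z1 B T])
  show "0 < w1 i" for i by (cases i) (simp_all add: w1_def)
  show "Nh O_R w1 i < 56457/25000 * w1 i ^ 2" for i by (cases i) (simp_all add: w1_def Nh_O_R)
  show "0 < z1 i" for i by (cases i) (simp_all add: z1_def)
  show "i \<noteq> B \<Longrightarrow> 56457/25000 * z1 i ^ 2 \<le> Nh O_R z1 i" for i by (cases i) (simp_all add: z1_def Nh_O_R)
  show "z1 B < z1 T" by (simp add: z1_def)
qed

lemma hyp_O_B: "hyp_evec 3 O_B Q < hyp_evec 3 O_B R"
proof (rule hg3.hyp_compare[OF hg3_O_B, of w2 "9269/4000" z2 Q R])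
  show "0 < w2 i" for i by (cases i) (simp_all add: w2_def)
  show "Nh O_B w2 i < 9269/4000 * w2 i ^ 2" for i by (cases i) (simp_all add: w2_def Nh_O_B)
  show "0 < z2 i" for i by (cases i) (simp_all add: z2_def)
  show "i \<noteq> Q \<Longrightarrow> 9269/4000 * z2 i ^ 2 \<le> Nh O_B z2 i" for i by (cases i) (simp_all add: z2_def Nh_O_B)
  show "z2 Q < z2 R" by (simp add: z2_def)
qed

lemma sh_O_B: "shadow_evec O_B R < shadow_evec O_B Q"
proof (rule hg3.sh_compare[OF hg3_O_B, of w3 "47457/10000" z3 R Q])
  show "0 < w3 i" for i by (cases i) (simp_all add: w3_def)
  show "As (shadow_adj O_B) w3 i < 47457/10000 * w3 i" for i by (cases i) (simp_all add: w3_def As_O_B)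
  show "0 < z3 i" for i by (cases i) (simp_all add: z3_def)
  show "i \<noteq> R \<Longrightarrow> 47457/10000 * z3 i \<le> As (shadow_adj O_B) z3 i" for i by (cases i) (simp_all add: z3_def As_O_B)
  show "z3 R < z3 Q" by (simp add: z3_def)
qed

lemma sh_O_R: "shadow_evec O_R T = shadow_evec O_R B"
proof -
  define x where "x = shadow_evec O_R"
  define l where "l = perron_root (shadow_adj O_R)"
  have xpos: "\<And>i. 0 < x i" and xe: "\<And>i. As (shadow_adj O_R) x i = l * x i"
    using hg3.shadow_evec_props[OF hg3_O_R] by (auto simp: x_def l_def)
  have "l * x T = x P + x Q + x R + x S" using xe[of T] by (simp add: As_O_R)
  moreover have "0 < x P + x Q + x R + x S" using xpos by (simp add: add_pos_pos)
  ultimately have "0 < l * x T" by simp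
  hence lpos: "0 < l" using xpos[of T] by (simp add: zero_less_mult_iff)
  have "l * x T = l * x B" using xe[of T] xe[of B] by (simp add: As_O_R)
  thus ?thesis using lpos by (simp add: x_def)
qed

theorem theorem5p1:
  shows "opaque 3 O_R \<and> opaque 3 O_B"
proof
  show "opaque 3 O_R"
    unfolding opaque_def spectral_ranking_def
  proof
    assume eq: "{(i, j). hyp_evec 3 O_R j \<le> hyp_evec 3 O_R i} = {(i, j). shadow_evec O_R j \<le> shadow_evec O_R i}"
    have "(B, T) \<in> {(i, j). shadow_evec O_R j \<le> shadow_evec O_R i}" using sh_O_R by simp
    hence "(B, T) \<in> {(i, j). hyp_evec 3 O_R j \<le> hyp_evec 3 O_R i}" using eq by simp
    thus False using hyp_O_R by simp
  qed
  show "opaque 3 O_B"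
    unfolding opaque_def spectral_ranking_def
  proof
    assume eq: "{(i, j). hyp_evec 3 O_B j \<le> hyp_evec 3 O_B i} = {(i, j). shadow_evec O_B j \<le> shadow_evec O_B i}"
    have "(Q, R) \<in> {(i, j). shadow_evec O_B j \<le> shadow_evec O_B i}" using sh_O_B by simp
    hence "(Q, R) \<in> {(i, j). hyp_evec 3 O_B j \<le> hyp_evec 3 O_B i}" using eq by simp
    thus False using hyp_O_B by simp
  qed
qed


end
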